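(* Let $\mathbb{X},\mathbb{Y}$ be real Banach spaces and let $T:\mathbb{X}\to\mathbb{Y}$ be a bounded linear operator that preserves Birkhoff–James orthogonality at a point $x\in\mathbb{X}$. If $Tx$ is a smooth point of $\mathbb{Y}$, then $x$ is a smooth point of $\mathbb{X}$.
   Context: All spaces are real Banach spaces. For $u,v\in\mathbb{X}$, $u$ is Birkhoff–James orthogonal to $v$, written $u\perp_B v$, if $\|u+\lambda v\|\ge\|u\|$ for all $\lambda\in\mathbb{R}$. A bounded linear operator $T$ preserves Birkhoff–James orthogonality at $x$ if for all $v\in\mathbb{X}$, $x\perp_B v$ implies $Tx\perp_B Tv$. For non-zero $z$, $J(z)=\{f\in\mathbb{X}^*:\|f\|=1,\ f(z)=\|z\|\}$; a non-zero $z$ is smooth if $J(z)$ is a singleton (equivalently $\dim\operatorname{span}J(z)=1$). *)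

theory Defs
  imports "HOL-Analysis.Analysis"
begin

definition bj_orth :: "'a::real_normed_vector \<Rightarrow> 'a \<Rightarrow> bool" where
  "bj_orth u v \<longleftrightarrow> (\<forall>t::real. norm (u + t *\<^sub>R v) \<ge> norm u)"

definition preserves_bj_at :: "('a::real_normed_vector \<Rightarrow> 'b::real_normed_vector) \<Rightarrow> 'a \<Rightarrow> bool" where
  "preserves_bj_at T x \<longleftrightarrow> (\<forall>v. bj_orth x v \<longrightarrow> bj_orth (T x) (T v))"

definition norming_functionals :: "'a::real_normed_vector \<Rightarrow> ('a \<Rightarrow> real) set" where
  "norming_functionals z = {f. bounded_linear f \<and> onorm f = 1 \<and> f z = norm z}"

definition smooth_point :: "'a::real_normed_vector \<Rightarrow> bool" where
  "smooth_point z \<longleftrightarrow> z \<noteq> 0 \<and> (\<exists>f. norming_functionals z = {f})"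

end

theory Submission
  imports Defs
begin


definition lsub :: "('a::real_normed_vector \<times> real) set \<Rightarrow> bool" where
  "lsub G \<longleftrightarrow> (0,0) \<in> G \<and> (\<forall>p\<in>G. \<forall>q\<in>G. p + q \<in> G) \<and> (\<forall>c. \<forall>p\<in>G. c *\<^sub>R p \<in> G)"

definition dom_ok :: "('a::real_normed_vector \<times> real) set \<Rightarrow> bool" where
  "dom_ok G \<longleftrightarrow> (\<forall>v r. (v,r) \<in> G \<longrightarrow> r \<le> norm v)"

lemma lsub_add: "lsub G \<Longrightarrow> (u,r) \<in> G \<Longrightarrow> (w,s) \<in> G \<Longrightarrow> (u+w, r+s) \<in> G"
  unfolding lsub_def by (metis add_Pair)

lemma lsub_scale: "lsub G \<Longrightarrow> (u,r) \<in> G \<Longrightarrow> (c *\<^sub>R u, c * r) \<in> G"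
  unfolding lsub_def by (metis scaleR_Pair real_scaleR_def)

lemma lsub_unique:
  assumes "lsub G" "dom_ok G" "(v,r) \<in> G" "(v,s) \<in> G" shows "r = s"
proof -
  have "(v + (-1) *\<^sub>R v, r + (-1) * s) \<in> G"
    using assms lsub_add lsub_scale by blast
  hence a: "r - s \<le> 0" using assms(2) unfolding dom_ok_def by force
  have "(v + (-1) *\<^sub>R v, s + (-1) * r) \<in> G"
    using assms lsub_add lsub_scale by blast
  hence "s - r \<le> 0" using assms(2) unfolding dom_ok_def by force
  with a show ?thesis by simp
qed

lemma one_step:
  assumes L: "lsub M" and D: "dom_ok M" and v: "v \<notin> fst ` M"
  shows "\<exists>M'. lsub M' \<and> dom_ok M' \<and> M \<subseteq> M' \<and> M' \<noteq> M"
proof -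
  define S where "S = {s - norm (w - v) | w s. (w,s) \<in> M}"
  define c where "c = Sup S"
  have bnd: "s - norm (w - v) \<le> norm (u + v) - r" if "(u,r) \<in> M" "(w,s) \<in> M" for u r w s
  proof -
    have "(u+w, r+s) \<in> M" using L that lsub_add by blast
    hence "r + s \<le> norm (u + w)" using D unfolding dom_ok_def by blast
    also have "\<dots> \<le> norm (u+v) + norm (w - v)"
      using norm_triangle_ineq[of "u+v" "w-v"] by (simp add: algebra_simps)
    finally show ?thesis by simp
  qed
  have z: "(0,0) \<in> M" using L unfolding lsub_def by simp
  have Sne: "S \<noteq> {}" using z unfolding S_def by blast
  have Sbd: "bdd_above S" unfolding S_def bdd_above_def using bnd[OF z] by auto
  have c1: "s - norm (w - v) \<le> c" if "(w,s) \<in> M" for w s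
    unfolding c_def by (rule cSup_upper[OF _ Sbd]) (use that S_def in blast)
  have c2: "c \<le> norm (u + v) - r" if "(u,r) \<in> M" for u r
    unfolding c_def by (rule cSup_least[OF Sne]) (use bnd[OF that] S_def in blast)
  define M' where "M' = {(u + t *\<^sub>R v, r + t * c) | u r t. (u,r) \<in> M}"
  have "lsub M'"
    unfolding lsub_def
  proof (intro conjI ballI allI)
    show "(0,0) \<in> M'" unfolding M'_def using z by force
  next
    fix p q assume "p \<in> M'" "q \<in> M'"
    then obtain u r t u' r' t' where p: "p = (u + t *\<^sub>R v, r + t * c)" "(u,r) \<in> M"
      and q: "q = (u' + t' *\<^sub>R v, r' + t' * c)" "(u',r') \<in> M" unfolding M'_def by blast
    have "(u+u', r+r') \<in> M" using L p q lsub_add by blast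
    moreover have "p + q = ((u+u') + (t+t') *\<^sub>R v, (r+r') + (t+t') * c)"
      using p q by (simp add: algebra_simps scaleR_add_left)
    ultimately show "p + q \<in> M'" unfolding M'_def by blast
  next
    fix a p assume "p \<in> M'"
    then obtain u r t where p: "p = (u + t *\<^sub>R v, r + t * c)" "(u,r) \<in> M" unfolding M'_def by blast
    have "(a *\<^sub>R u, a * r) \<in> M" using L p lsub_scale by blast
    moreover have "a *\<^sub>R p = (a *\<^sub>R u + (a*t) *\<^sub>R v, a * r + (a*t) * c)"
      using p by (simp add: algebra_simps scaleR_add_right)
    ultimately show "a *\<^sub>R p \<in> M'" unfolding M'_def by blast
  qed
  moreover have "dom_ok M'"
    unfolding dom_ok_def
  proof (intro allI impI)
    fix x y assume "(x,y) \<in> M'"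
    then obtain u r t where xy: "x = u + t *\<^sub>R v" "y = r + t * c" and ur: "(u,r) \<in> M"
      unfolding M'_def by blast
    consider "t = 0" | "t > 0" | "t < 0" by linarith
    then show "y \<le> norm x"
    proof cases
      case 1 then show ?thesis using xy ur D unfolding dom_ok_def by auto
    next
      case 2
      have "((1/t) *\<^sub>R u, (1/t) * r) \<in> M" using L ur lsub_scale by blast
      from c2[OF this] have "t * c \<le> t * (norm ((1/t) *\<^sub>R u + v) - (1/t) * r)"
        using 2 by (simp add: mult_left_mono)
      also have "\<dots> = t * norm ((1/t) *\<^sub>R u + v) - r" using 2 by (simp add: right_diff_distrib)
      also have "t * norm ((1/t) *\<^sub>R u + v) = norm (t *\<^sub>R ((1/t) *\<^sub>R u + v))" using 2 by simp
      also have "t *\<^sub>R ((1/t) *\<^sub>R u + v) = x" using 2 xy by (simp add: scaleR_add_right)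
      finally show ?thesis using xy by simp
    next
      case 3
      define s where "s = - t"
      have s: "s > 0" using 3 s_def by simp
      have "((1/s) *\<^sub>R u, (1/s) * r) \<in> M" using L ur lsub_scale by blast
      from c1[OF this] have "s * ((1/s) * r - norm ((1/s) *\<^sub>R u - v)) \<le> s * c"
        using s by (simp add: mult_left_mono)
      moreover have "s * ((1/s) * r - norm ((1/s) *\<^sub>R u - v)) = r - s * norm ((1/s) *\<^sub>R u - v)"
        using s by (simp add: right_diff_distrib)
      moreover have "s * norm ((1/s) *\<^sub>R u - v) = norm (s *\<^sub>R ((1/s) *\<^sub>R u - v))" using s by simp
      ultimately have "r - norm (s *\<^sub>R ((1/s) *\<^sub>R u - v)) \<le> s * c" by simp
      moreover have "s *\<^sub>R ((1/s) *\<^sub>R u - v) = x" using s xy s_def by (simp add: scaleR_diff_right)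
      ultimately have "r - norm x \<le> s * c" by simp
      moreover have "s * c = - (t * c)" using s_def by simp
      ultimately show ?thesis using xy by linarith
    qed
  qed
  moreover have "M \<subseteq> M'"
  proof
    fix p assume "p \<in> M"
    then obtain u r where "p = (u,r)" "(u,r) \<in> M" by (cases p) auto
    moreover have "p = (u + 0 *\<^sub>R v, r + 0 * c)" using \<open>p = (u,r)\<close> by simp
    ultimately show "p \<in> M'" unfolding M'_def by blast
  qed
  moreover have "(0 + 1 *\<^sub>R v, 0 + 1 * c) \<in> M'" unfolding M'_def using z by blast
  hence "M' \<noteq> M" using v by force
  ultimately show ?thesis by blast
qed

lemma lsubD: "lsub G \<Longrightarrow> (0,0) \<in> G"  "lsub G \<Longrightarrow> p \<in> G \<Longrightarrow> q \<in> G \<Longrightarrow> p + q \<in> G"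
  "lsub G \<Longrightarrow> p \<in> G \<Longrightarrow> a *\<^sub>R p \<in> G"
  unfolding lsub_def by auto

lemma hahn_banach_graph:
  fixes G0 :: "('a::real_normed_vector \<times> real) set"
  assumes L0: "lsub G0" and D0: "dom_ok G0"
  shows "\<exists>F. bounded_linear F \<and> (\<forall>v. \<bar>F v\<bar> \<le> norm v) \<and> (\<forall>v r. (v,r) \<in> G0 \<longrightarrow> F v = r)"
proof -
  define A where "A = {G. G0 \<subseteq> G \<and> lsub G \<and> dom_ok G}"
  have "\<forall>C\<in>chains A. \<exists>U\<in>A. \<forall>X\<in>C. X \<subseteq> U"
  proof
    fix C assume C: "C \<in> chains A"
    show "\<exists>U\<in>A. \<forall>X\<in>C. X \<subseteq> U"
    proof (cases "C = {}")
      case True then show ?thesis using L0 D0 A_def by auto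
    next
      case False
      have CA: "\<And>X. X \<in> C \<Longrightarrow> G0 \<subseteq> X \<and> lsub X \<and> dom_ok X"
        using C unfolding chains_def A_def by auto
      have ch: "\<And>X Y. X \<in> C \<Longrightarrow> Y \<in> C \<Longrightarrow> X \<subseteq> Y \<or> Y \<subseteq> X"
        using C unfolding chains_def chain_subset_def by auto
      obtain X0 where X0: "X0 \<in> C" using False by auto
      have "lsub (\<Union>C)"
        unfolding lsub_def
      proof (intro conjI ballI allI)
        show "(0,0) \<in> \<Union>C" using CA[OF X0] lsubD(1) X0 by blast
      next
        fix p q assume "p \<in> \<Union>C" "q \<in> \<Union>C"
        then obtain X Y where XY: "X \<in> C" "Y \<in> C" "p \<in> X" "q \<in> Y" by blast
        show "p + q \<in> \<Union>C"
        proof (cases "X \<subseteq> Y")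
          case True
          then have "p + q \<in> Y" using XY CA[OF XY(2)] lsubD(2) by blast
          then show ?thesis using XY by blast
        next
          case False
          then have "Y \<subseteq> X" using ch XY by blast
          then have "p + q \<in> X" using XY CA[OF XY(1)] lsubD(2) by blast
          then show ?thesis using XY by blast
        qed
      next
        fix a p assume "p \<in> \<Union>C"
        then obtain Z where Z: "Z \<in> C" "p \<in> Z" by blast
        then have "a *\<^sub>R p \<in> Z" using CA[OF Z(1)] lsubD(3) by blast
        then show "a *\<^sub>R p \<in> \<Union>C" using Z by blast
      qed
      moreover have "dom_ok (\<Union>C)"
        unfolding dom_ok_def
      proof (intro allI impI)
        fix v r assume "(v,r) \<in> \<Union>C"
        then obtain Z where Z: "Z \<in> C" "(v,r) \<in> Z" by blast
        then show "r \<le> norm v" using CA[OF Z(1)] unfolding dom_ok_def by blast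
      qed
      moreover have "G0 \<subseteq> \<Union>C" using CA[OF X0] X0 by blast
      ultimately have "\<Union>C \<in> A" unfolding A_def by blast
      then show ?thesis by blast
    qed
  qed
  from Zorn_Lemma2[OF this] obtain M where MA: "M \<in> A" and Mmax: "\<And>X. X \<in> A \<Longrightarrow> M \<subseteq> X \<Longrightarrow> X = M" by blast
  have L: "lsub M" and D: "dom_ok M" and G0M: "G0 \<subseteq> M" using MA A_def by auto
  have full: "\<exists>r. (v,r) \<in> M" for v
  proof (rule ccontr)
    assume "\<not> ?thesis"
    then have "v \<notin> fst ` M" by force
    from one_step[OF L D this] obtain M' where M': "lsub M'" "dom_ok M'" "M \<subseteq> M'" "M' \<noteq> M" by blast
    then have "M' \<in> A" using G0M unfolding A_def by blast
    then show False using Mmax M' by blast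
  qed
  define F where "F v = (THE r. (v,r) \<in> M)" for v
  have FM: "(v, F v) \<in> M" for v
  proof -
    obtain r where r: "(v,r) \<in> M" using full by blast
    have "(THE r. (v,r) \<in> M) = r" using lsub_unique[OF L D r] r by blast
    then show ?thesis using r F_def by simp
  qed
  have Fadd: "F (u + w) = F u + F w" for u w
    using lsub_unique[OF L D FM lsub_add[OF L FM FM]] .
  have Fscale: "F (a *\<^sub>R u) = a * F u" for a u
    using lsub_unique[OF L D FM lsub_scale[OF L FM]] .
  have Fle: "F v \<le> norm v" for v using D FM dom_ok_def by blast
  have Fabs: "\<bar>F v\<bar> \<le> norm v" for v
  proof -
    have "F ((-1) *\<^sub>R v) \<le> norm ((-1) *\<^sub>R v)" by (rule Fle)
    moreover have "F ((-1) *\<^sub>R v) = - F v" using Fscale[of "-1" v] by simp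
    ultimately have "- F v \<le> norm v" by simp
    then show ?thesis using Fle[of v] by simp
  qed
  have "bounded_linear F"
    by (rule bounded_linear_intro[of _ 1]) (auto simp: Fadd Fscale intro: Fabs)
  moreover have "\<forall>v r. (v,r) \<in> G0 \<longrightarrow> F v = r"
    using lsub_unique[OF L D FM] G0M by blast
  ultimately show ?thesis using Fabs by blast
qed



lemma orth_functional:
  fixes x w :: "'a::real_normed_vector"
  assumes x0: "x \<noteq> 0" and orth: "bj_orth x w"
  shows "\<exists>F. F \<in> norming_functionals x \<and> F w = 0"
proof -
  define G0 where "G0 = {(a *\<^sub>R x + b *\<^sub>R w, a * norm x) | a b. True}"
  have L: "lsub G0" unfolding lsub_def
  proof (intro conjI ballI allI)
    show "(0,0) \<in> G0" unfolding G0_def by (auto intro!: exI[of _ 0])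
  next
    fix p q assume "p \<in> G0" "q \<in> G0"
    then obtain a b a' b' where "p = (a *\<^sub>R x + b *\<^sub>R w, a * norm x)" "q = (a' *\<^sub>R x + b' *\<^sub>R w, a' * norm x)"
      unfolding G0_def by blast
    then have "p + q = ((a+a') *\<^sub>R x + (b+b') *\<^sub>R w, (a+a') * norm x)"
      by (simp add: algebra_simps scaleR_add_left)
    then show "p + q \<in> G0" unfolding G0_def by blast
  next
    fix c p assume "p \<in> G0"
    then obtain a b where "p = (a *\<^sub>R x + b *\<^sub>R w, a * norm x)" unfolding G0_def by blast
    then have "c *\<^sub>R p = ((c*a) *\<^sub>R x + (c*b) *\<^sub>R w, (c*a) * norm x)"
      by (simp add: algebra_simps scaleR_add_right)
    then show "c *\<^sub>R p \<in> G0" unfolding G0_def by blast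
  qed
  have D: "dom_ok G0" unfolding dom_ok_def
  proof (intro allI impI)
    fix v r assume "(v,r) \<in> G0"
    then obtain a b where vr: "v = a *\<^sub>R x + b *\<^sub>R w" "r = a * norm x" unfolding G0_def by blast
    show "r \<le> norm v"
    proof (cases "a = 0")
      case True then show ?thesis using vr by simp
    next
      case False
      have "v = a *\<^sub>R (x + (b/a) *\<^sub>R w)" using vr False by (simp add: scaleR_add_right)
      then have "norm v = \<bar>a\<bar> * norm (x + (b/a) *\<^sub>R w)" by simp
      moreover have "norm x \<le> norm (x + (b/a) *\<^sub>R w)" using orth unfolding bj_orth_def by blast
      ultimately have "\<bar>a\<bar> * norm x \<le> norm v" by (simp add: mult_left_mono)
      moreover have "a * norm x \<le> \<bar>a\<bar> * norm x" by (simp add: mult_right_mono)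
      ultimately show ?thesis using vr by linarith
    qed
  qed
  from hahn_banach_graph[OF L D] obtain F where F: "bounded_linear F" "\<And>v. \<bar>F v\<bar> \<le> norm v"
    and FG: "\<And>v r. (v,r) \<in> G0 \<Longrightarrow> F v = r" by blast
  have "(1 *\<^sub>R x + 0 *\<^sub>R w, 1 * norm x) \<in> G0" unfolding G0_def by blast
  then have Fx: "F x = norm x" using FG by fastforce
  have "(0 *\<^sub>R x + 1 *\<^sub>R w, 0 * norm x) \<in> G0" unfolding G0_def by blast
  then have Fw: "F w = 0" using FG by fastforce
  have "onorm F \<le> 1" by (rule onorm_bound) (use F(2) in auto)
  moreover have "norm (F x) / norm x \<le> onorm F" by (rule le_onorm[OF F(1)])
  then have "1 \<le> onorm F" using Fx x0 by simp
  ultimately have "onorm F = 1" by simp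
  then show ?thesis using F(1) Fx Fw unfolding norming_functionals_def by blast
qed

theorem mainTheorem1:
  fixes T :: "'a::banach \<Rightarrow> 'b::banach" and x :: 'a
  assumes "bounded_linear T"
    and "preserves_bj_at T x"
    and "smooth_point (T x)"
  shows "smooth_point x"
proof -
  interpret T: bounded_linear T by (rule assms(1))
  from assms(3) obtain g where Tx0: "T x \<noteq> 0" and Jg: "norming_functionals (T x) = {g}"
    unfolding smooth_point_def by blast
  have x0: "x \<noteq> 0" using Tx0 T.zero by auto
  have g: "bounded_linear g" "g (T x) = norm (T x)" using Jg unfolding norming_functionals_def by auto
  interpret g: bounded_linear g by (rule g(1))
  have gorth: "g w = 0" if ow: "bj_orth (T x) w" for w
  proof -
    obtain F where "F \<in> norming_functionals (T x)" "F w = 0" using orth_functional[OF Tx0 ow] by blast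
    then show ?thesis using Jg by simp
  qed
  have key: "f v = norm x * g (T v) / norm (T x)" if f: "f \<in> norming_functionals x" for f v
  proof -
    have fl: "bounded_linear f" and fo: "onorm f = 1" and fx: "f x = norm x"
      using f unfolding norming_functionals_def by auto
    interpret f: bounded_linear f by (rule fl)
    define u where "u = v - (f v / norm x) *\<^sub>R x"
    have fu: "f u = 0" using x0 fx unfolding u_def by (simp add: f.diff f.scaleR)
    have "bj_orth x u" unfolding bj_orth_def
    proof
      fix t :: real
      have "f (x + t *\<^sub>R u) \<le> norm (x + t *\<^sub>R u)"
        using onorm[OF fl, of "x + t *\<^sub>R u"] fo by simp
      then show "norm x \<le> norm (x + t *\<^sub>R u)" using fx fu by (simp add: f.add f.scaleR)
    qed
    then have "bj_orth (T x) (T u)" using assms(2) unfolding preserves_bj_at_def by blast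
    then have "g (T u) = 0" by (rule gorth)
    then have "g (T v) = (f v / norm x) * norm (T x)"
      unfolding u_def by (simp add: T.diff T.scaleR g.diff g.scaleR g(2))
    then show ?thesis using x0 Tx0 by (simp add: field_simps)
  qed
  obtain f0 where f0: "f0 \<in> norming_functionals x" using orth_functional[OF x0, of 0]
    unfolding bj_orth_def by auto
  have "norming_functionals x = {f0}"
  proof
    show "{f0} \<subseteq> norming_functionals x" using f0 by simp
    show "norming_functionals x \<subseteq> {f0}"
    proof
      fix f assume f: "f \<in> norming_functionals x"
      have "f = f0" by (rule ext) (simp add: key[OF f] key[OF f0])
      then show "f \<in> {f0}" by simp
    qed
  qed
  then show ?thesis unfolding smooth_point_def using x0 by blast
qed

end
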